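(* Let $\mathcal C$ be the smallest set of completely characterizable cardinals that contains $\aleph_0$ and is closed under successors ($\kappa\in\mathcal C\Rightarrow\kappa^+\in\mathcal C$), countable unions (if $\kappa_n\in\mathcal C$ for $n\in\omega$ then $\sup_n\kappa_n\in\mathcal C$), countable products (if $\kappa_n\in\mathcal C$ for $n\in\omega$ then $\prod_n\kappa_n\in\mathcal C$) and powerset ($\kappa\in\mathcal C\Rightarrow 2^\kappa\in\mathcal C$). Then $\mathcal C$ is closed under powers: if $\kappa,\mu\in\mathcal C$ then $\kappa^{\mu}\in\mathcal C$.
   Context: All languages are countable; $L_{\omega_1,\omega}$ allows countable conjunctions/disjunctions and finite quantification. A sentence $\sigma\in L_{\omega_1,\omega}$ is complete if for every $L_{\omega_1,\omega}$-sentence $\tau$, either $\sigma\Rightarrow\tau$ or $\sigma\Rightarrow\neg\tau$ is valid. An infinite cardinal $\mu$ is completely characterizable if there is a complete $L_{\omega_1,\omega}$-sentence with models in all infinite cardinalities $\le\mu$ and no model of cardinality $\mu^+$. *)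

theory Defs
  imports Main "HOL-Library.Equipollence" "HOL-Library.FuncSet"
begin

text \<open>
  Cardinals are represented by sets (a set A stands for its cardinality),
  all taken as subsets of a fixed ambient type 'a; membership is invariant
  under equipollence.
\<close>

inductive_set CC :: "'a set set" where
  aleph0: "B \<approx> (UNIV :: nat set) \<Longrightarrow> B \<in> CC"
| succ: "A \<in> CC \<Longrightarrow> (card_of B, cardSuc (card_of (A :: 'a set))) \<in> ordIso \<Longrightarrow> B \<in> CC"
| sup: "(\<And>n. (A :: nat \<Rightarrow> 'a set) n \<in> CC) \<Longrightarrow> (\<And>n. A n \<lesssim> B)
        \<Longrightarrow> (\<And>X :: 'a set. (\<forall>n. A n \<lesssim> X) \<Longrightarrow> B \<lesssim> X) \<Longrightarrow> B \<in> CC"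
| prod: "(\<And>n. (A :: nat \<Rightarrow> 'a set) n \<in> CC) \<Longrightarrow> B \<approx> Pi\<^sub>E (UNIV :: nat set) A \<Longrightarrow> B \<in> CC"
| pow: "A \<in> CC \<Longrightarrow> B \<approx> Pow A \<Longrightarrow> B \<in> CC"

end

theory Submission imports Defs begin
unbundle cardinal_syntax

lemma lepoll_ord: "A \<lesssim> B \<longleftrightarrow> |A| \<le>o |B|"
  unfolding lepoll_def card_of_ordLeq[symmetric] by auto

lemma lepoll_total: "A \<lesssim> B \<or> B \<lesssim> A"
  using ordLeq_total[OF card_of_Well_order card_of_Well_order, of A B] by (simp add: lepoll_ord)

lemma sq_eqpoll: "infinite X \<Longrightarrow> X \<times> X \<approx> X"
  by (simp add: eqpoll_iff_card_of_ordIso card_of_Times_same_infinite)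

lemma tmax: assumes "infinite Y" "X \<lesssim> Y" "X \<noteq> {}" shows "X \<times> Y \<approx> Y"
proof (rule lepoll_antisym)
  have "X \<times> Y \<lesssim> Y \<times> Y" using times_lepoll_mono[OF assms(2) lepoll_refl] .
  also have "Y \<times> Y \<approx> Y" using sq_eqpoll[OF assms(1)] .
  finally show "X \<times> Y \<lesssim> Y" .
  obtain x where "x \<in> X" using assms(3) by blast
  have "Y \<approx> {x} \<times> Y" using eqpoll_sym[OF times_singleton_eqpoll] .
  also have "{x} \<times> Y \<lesssim> X \<times> Y" using \<open>x\<in>X\<close> by (intro subset_imp_lepoll) auto
  finally show "Y \<lesssim> X \<times> Y" .
qed

lemma tmax2: assumes "infinite Y" "X \<lesssim> Y" "X \<noteq> {}" shows "Y \<times> X \<approx> Y"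
  using eqpoll_trans[OF times_commute_eqpoll tmax[OF assms]] .

lemma rep: "X \<lesssim> (B::'a set) \<Longrightarrow> \<exists>C::'a set. C \<approx> X"
  unfolding lepoll_def by (metis eqpoll_sym inj_on_image_eqpoll_self)

lemma fun_cong_eqpoll: assumes "M \<approx> M'" "K \<approx> K'" "K \<noteq> {}"
  shows "(M \<rightarrow>\<^sub>E K) \<approx> (M' \<rightarrow>\<^sub>E K')"
proof -
  have "K' \<noteq> {}" using assms(2,3) by (metis eqpoll_empty_iff_empty eqpoll_sym)
  show ?thesis
  proof (rule lepoll_antisym)
    show "(M \<rightarrow>\<^sub>E K) \<lesssim> (M' \<rightarrow>\<^sub>E K')"
      by (rule lepoll_funcset[OF assms(3) eqpoll_imp_lepoll[OF assms(1)] eqpoll_imp_lepoll[OF assms(2)]])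
    show "(M' \<rightarrow>\<^sub>E K') \<lesssim> (M \<rightarrow>\<^sub>E K)"
      by (rule lepoll_funcset[OF \<open>K'\<noteq>{}\<close> eqpoll_imp_lepoll[OF eqpoll_sym[OF assms(1)]] eqpoll_imp_lepoll[OF eqpoll_sym[OF assms(2)]]])
  qed
qed

lemma PiE_cong_eqpoll: assumes "\<And>i. i \<in> I \<Longrightarrow> A i \<approx> C i" shows "Pi\<^sub>E I A \<approx> Pi\<^sub>E I C"
proof (rule lepoll_antisym)
  show "Pi\<^sub>E I A \<lesssim> Pi\<^sub>E I C" by (rule lepoll_PiE) (simp add: assms eqpoll_imp_lepoll)
  show "Pi\<^sub>E I C \<lesssim> Pi\<^sub>E I A" by (rule lepoll_PiE) (simp add: assms eqpoll_imp_lepoll eqpoll_sym)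
qed

lemma Pow_fun: "Pow X \<approx> (X \<rightarrow>\<^sub>E (UNIV::bool set))"
  unfolding eqpoll_def
proof
  show "bij_betw (\<lambda>S. \<lambda>x\<in>X. x \<in> S) (Pow X) (X \<rightarrow>\<^sub>E UNIV)"
    unfolding bij_betw_def
  proof
    show "inj_on (\<lambda>S. \<lambda>x\<in>X. x \<in> S) (Pow X)"
      by (auto simp: inj_on_def fun_eq_iff; metis restrict_apply' subsetD)
    show "(\<lambda>S. \<lambda>x\<in>X. x \<in> S) ` Pow X = X \<rightarrow>\<^sub>E UNIV"
    proof (auto)
      fix f assume f: "f \<in> X \<rightarrow>\<^sub>E (UNIV::bool set)"
      show "f \<in> (\<lambda>S. \<lambda>x\<in>X. x \<in> S) ` Pow X"
        by (rule image_eqI[where x="{x\<in>X. f x}"]) (use f in \<open>auto simp: fun_eq_iff PiE_def extensional_def\<close>)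
    qed
  qed
qed

lemma curry_eqpoll: "(M \<rightarrow>\<^sub>E (N \<rightarrow>\<^sub>E K)) \<approx> (M \<times> N \<rightarrow>\<^sub>E K)"
  unfolding eqpoll_def
proof
  let ?F = "\<lambda>f. \<lambda>p\<in>M \<times> N. f (fst p) (snd p)"
  show "bij_betw ?F (M \<rightarrow>\<^sub>E (N \<rightarrow>\<^sub>E K)) (M \<times> N \<rightarrow>\<^sub>E K)"
    unfolding bij_betw_def
  proof
    show "inj_on ?F (M \<rightarrow>\<^sub>E (N \<rightarrow>\<^sub>E K))"
    proof (rule inj_onI)
      fix f g assume f: "f \<in> M \<rightarrow>\<^sub>E (N \<rightarrow>\<^sub>E K)" and g: "g \<in> M \<rightarrow>\<^sub>E (N \<rightarrow>\<^sub>E K)" and e: "?F f = ?F g"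
      show "f = g"
      proof (rule PiE_ext[OF f g])
        fix m assume m: "m \<in> M"
        show "f m = g m"
        proof (rule PiE_ext)
          show "f m \<in> N \<rightarrow>\<^sub>E K" "g m \<in> N \<rightarrow>\<^sub>E K" using f g m by auto
          fix n assume "n \<in> N"
          then show "f m n = g m n" using fun_cong[OF e, of "(m,n)"] m by simp
        qed
      qed
    qed
    show "?F ` (M \<rightarrow>\<^sub>E (N \<rightarrow>\<^sub>E K)) = (M \<times> N \<rightarrow>\<^sub>E K)"
    proof
      show "?F ` (M \<rightarrow>\<^sub>E (N \<rightarrow>\<^sub>E K)) \<subseteq> (M \<times> N \<rightarrow>\<^sub>E K)"
        apply (rule image_subsetI) apply (simp only: restrict_PiE_iff) using PiE_mem by fastforce
      show "(M \<times> N \<rightarrow>\<^sub>E K) \<subseteq> ?F ` (M \<rightarrow>\<^sub>E (N \<rightarrow>\<^sub>E K))"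
      proof
        fix h assume h: "h \<in> M \<times> N \<rightarrow>\<^sub>E K"
        show "h \<in> ?F ` (M \<rightarrow>\<^sub>E (N \<rightarrow>\<^sub>E K))"
          by (rule image_eqI[where x="\<lambda>m\<in>M. \<lambda>n\<in>N. h (m,n)"])
             (use h in \<open>auto simp: fun_eq_iff PiE_def extensional_def\<close>)
      qed
    qed
  qed
qed

lemma swap_eqpoll: "(M \<rightarrow>\<^sub>E Pi\<^sub>E I A) \<approx> Pi\<^sub>E I (\<lambda>i. M \<rightarrow>\<^sub>E A i)"
  unfolding eqpoll_def
proof
  let ?F = "\<lambda>f. \<lambda>i\<in>I. \<lambda>m\<in>M. f m i"
  show "bij_betw ?F (M \<rightarrow>\<^sub>E Pi\<^sub>E I A) (Pi\<^sub>E I (\<lambda>i. M \<rightarrow>\<^sub>E A i))"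
    unfolding bij_betw_def
  proof
    show "inj_on ?F (M \<rightarrow>\<^sub>E Pi\<^sub>E I A)"
    proof (rule inj_onI)
      fix f g assume f: "f \<in> M \<rightarrow>\<^sub>E Pi\<^sub>E I A" and g: "g \<in> M \<rightarrow>\<^sub>E Pi\<^sub>E I A" and e: "?F f = ?F g"
      show "f = g"
      proof (rule PiE_ext[OF f g])
        fix m assume m: "m \<in> M"
        show "f m = g m"
        proof (rule PiE_ext)
          show "f m \<in> Pi\<^sub>E I A" "g m \<in> Pi\<^sub>E I A" using f g m by auto
          fix i assume "i \<in> I"
          then show "f m i = g m i" using fun_cong[OF fun_cong[OF e, of i], of m] m by simp
        qed
      qed
    qed
    show "?F ` (M \<rightarrow>\<^sub>E Pi\<^sub>E I A) = Pi\<^sub>E I (\<lambda>i. M \<rightarrow>\<^sub>E A i)"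
    proof
      show "?F ` (M \<rightarrow>\<^sub>E Pi\<^sub>E I A) \<subseteq> Pi\<^sub>E I (\<lambda>i. M \<rightarrow>\<^sub>E A i)"
        apply (rule image_subsetI) apply (simp only: restrict_PiE_iff) using PiE_mem by fastforce
      show "Pi\<^sub>E I (\<lambda>i. M \<rightarrow>\<^sub>E A i) \<subseteq> ?F ` (M \<rightarrow>\<^sub>E Pi\<^sub>E I A)"
      proof
        fix h assume h: "h \<in> Pi\<^sub>E I (\<lambda>i. M \<rightarrow>\<^sub>E A i)"
        show "h \<in> ?F ` (M \<rightarrow>\<^sub>E Pi\<^sub>E I A)"
          by (rule image_eqI[where x="\<lambda>m\<in>M. \<lambda>i\<in>I. h i m"])
             (use h in \<open>auto simp: fun_eq_iff PiE_def extensional_def\<close>)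
      qed
    qed
  qed
qed


lemma Pow_lepoll_mono: "X \<lesssim> Y \<Longrightarrow> Pow X \<lesssim> Pow Y"
proof -
  assume a: "X \<lesssim> Y"
  have "Pow X \<approx> (X \<rightarrow>\<^sub>E (UNIV::bool set))" by (rule Pow_fun)
  also have "(X \<rightarrow>\<^sub>E (UNIV::bool set)) \<lesssim> (Y \<rightarrow>\<^sub>E (UNIV::bool set))"
    by (rule lepoll_funcset_left) (use a in auto)
  also have "(Y \<rightarrow>\<^sub>E (UNIV::bool set)) \<approx> Pow Y" by (rule eqpoll_sym[OF Pow_fun])
  finally show ?thesis .
qed

lemma G: assumes "infinite M" "infinite K" "K \<lesssim> Pow M"
  shows "(M \<rightarrow>\<^sub>E K) \<approx> Pow M"
proof (rule lepoll_antisym)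
  have "(M \<rightarrow>\<^sub>E K) \<lesssim> (M \<rightarrow>\<^sub>E Pow M)" by (rule lepoll_funcset_right[OF assms(3)])
  also have "(M \<rightarrow>\<^sub>E Pow M) \<approx> (M \<rightarrow>\<^sub>E (M \<rightarrow>\<^sub>E (UNIV::bool set)))"
    by (rule fun_cong_eqpoll) (auto intro: Pow_fun)
  also have "\<dots> \<approx> (M \<times> M \<rightarrow>\<^sub>E (UNIV::bool set))" by (rule curry_eqpoll)
  also have "\<dots> \<approx> (M \<rightarrow>\<^sub>E (UNIV::bool set))"
    by (rule fun_cong_eqpoll[OF sq_eqpoll[OF assms(1)] eqpoll_refl]) simp
  also have "\<dots> \<approx> Pow M" by (rule eqpoll_sym[OF Pow_fun])
  finally show "(M \<rightarrow>\<^sub>E K) \<lesssim> Pow M" .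
  have "Pow M \<approx> (M \<rightarrow>\<^sub>E (UNIV::bool set))" by (rule Pow_fun)
  also have "\<dots> \<lesssim> (M \<rightarrow>\<^sub>E K)"
    by (rule lepoll_funcset_right) (rule finite_lepoll_infinite[OF assms(2)], simp)
  finally show "Pow M \<lesssim> (M \<rightarrow>\<^sub>E K)" .
qed

lemma const_lepoll: assumes "M \<noteq> {}" shows "K \<lesssim> (M \<rightarrow>\<^sub>E K)"
  unfolding lepoll_def
proof (intro exI conjI)
  obtain m where m: "m \<in> M" using assms by blast
  show "inj_on (\<lambda>x. \<lambda>y\<in>M. x) K"
    by (rule inj_onI) (metis m restrict_apply')
  show "(\<lambda>x. \<lambda>y\<in>M. x) ` K \<subseteq> M \<rightarrow>\<^sub>E K" by auto
qed

lemma proj_lepoll: assumes "\<And>n. A n \<noteq> {}" shows "A k \<lesssim> Pi\<^sub>E UNIV A"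
  unfolding lepoll_iff
proof (intro exI subsetI)
  fix x assume x: "x \<in> A k"
  let ?f = "\<lambda>m. if m = k then x else (SOME y. y \<in> A m)"
  have "?f m \<in> A m" for m using x assms[of m] by (cases "m = k") (auto simp: some_in_eq)
  then have "?f \<in> Pi\<^sub>E UNIV A" by (simp add: PiE_UNIV_domain)
  then show "x \<in> (\<lambda>f. f k) ` Pi\<^sub>E UNIV A" by (rule rev_image_eqI) simp
qed

lemma CC_eqpoll: fixes B B' :: "'a set" assumes "B \<in> CC" "B' \<approx> B" shows "B' \<in> CC"
  using assms(1)
proof (cases rule: CC.cases)
  case aleph0 then show ?thesis using CC.aleph0[OF eqpoll_trans[OF assms(2) aleph0]] by blast
next
  case (succ A)
  have "|B'| =o |B|" using assms(2) eqpoll_iff_card_of_ordIso by blast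
  then have "|B'| =o cardSuc |A|" using succ(2) ordIso_transitive by blast
  then show ?thesis by (rule CC.succ[OF succ(1)])
next
  case (sup A)
  show ?thesis
  proof (rule CC.sup[of A])
    show "A n \<in> CC" for n by (rule sup(1))
    show "A n \<lesssim> B'" for n by (rule lepoll_trans2[OF sup(2) eqpoll_sym[OF assms(2)]])
    show "B' \<lesssim> X" if "\<forall>n. A n \<lesssim> X" for X :: "'a set"
      by (rule lepoll_trans1[OF assms(2) sup(3)[OF that]])
  qed
next
  case (prod A) then show ?thesis using CC.prod[OF prod(1) eqpoll_trans[OF assms(2) prod(2)]] by blast
next
  case (pow A) then show ?thesis using CC.pow[OF pow(1) eqpoll_trans[OF assms(2) pow(2)]] by blast
qed

lemma inf_mono: "A \<lesssim> B \<Longrightarrow> infinite A \<Longrightarrow> infinite B"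
  by (metis infinite_le_lepoll lepoll_trans)

lemma CC_inf: "B \<in> CC \<Longrightarrow> infinite B"
proof (induction rule: CC.induct)
  case (aleph0 B) then show ?case using eqpoll_finite_iff[OF aleph0] by simp
next
  case (succ A B)
  have "|A| <o cardSuc |A|" by (rule cardSuc_greater[OF card_of_Card_order])
  then have "|A| <o |B|" by (rule ordLess_ordIso_trans[OF _ ordIso_symmetric[OF succ.hyps(2)]])
  then have "A \<lesssim> B" unfolding lepoll_ord by (rule ordLess_imp_ordLeq)
  then show ?case by (rule inf_mono[OF _ succ.IH])
next
  case (sup A B)
  show ?case by (rule inf_mono[OF sup.hyps(2) sup.IH])
next
  case (prod A B)
  have "A 0 \<lesssim> Pi\<^sub>E UNIV A" by (rule proj_lepoll) (metis prod.IH finite.emptyI)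
  then have "infinite (Pi\<^sub>E UNIV A)" by (rule inf_mono[OF _ prod.IH])
  then show ?case using eqpoll_finite_iff[OF prod.hyps(2)] by simp
next
  case (pow A B)
  have "infinite (Pow A)" by (rule inf_mono[OF lepoll_Pow_self pow.IH])
  then show ?case using eqpoll_finite_iff[OF pow.hyps(2)] by simp
qed

lemma nat_times: "infinite M \<Longrightarrow> M \<times> (UNIV::nat set) \<approx> M"
  by (rule tmax2) (auto simp: infinite_le_lepoll[symmetric])


lemma hausdorff:
  assumes infA: "infinite A" and MA: "M \<lesssim> A" and K: "|K| =o cardSuc |A|"
  shows "(M \<rightarrow>\<^sub>E K) \<lesssim> K \<times> (M \<rightarrow>\<^sub>E A)"
proof -
  let ?r = "|K|"
  have Cinf: "Cinfinite |A|" using infA by (simp add: cinfinite_def Field_card_of card_of_Card_order card_of_card_order_on)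
  have reg: "regularCard ?r"
    by (rule regularCard_ordIso[OF ordIso_symmetric[OF K] Cinfinite_cardSuc[OF Cinf] regularCard_cardSuc[OF Cinf]])
  have lt: "|A| <o ?r"
    by (rule ordLess_ordIso_trans[OF cardSuc_greater[OF card_of_Card_order] ordIso_symmetric[OF K]])
  have wo: "Well_order ?r" by (rule card_of_Well_order)
  then have refl: "Refl ?r" and tr: "trans ?r"
    unfolding well_order_on_def linear_order_on_def partial_order_on_def preorder_on_def by auto
  have fld: "Field ?r = K" by (rule Field_card_of)
  have und: "under ?r i \<lesssim> A" if i: "i \<in> K" for i
  proof -
    have "|underS ?r i| <o ?r" by (rule card_of_underS[OF card_of_Card_order]) (simp add: fld i)
    then have "|underS ?r i| <o cardSuc |A|" by (rule ordLess_ordIso_trans[OF _ K])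
    then have "|underS ?r i| \<le>o |A|"
      using cardSuc_ordLeq_ordLess[OF card_of_Card_order card_of_Card_order] by blast
    then have u: "underS ?r i \<lesssim> A" by (simp add: lepoll_ord)
    have e: "under ?r i = insert i (underS ?r i)"
      using Refl_under_underS[OF refl] i fld by auto
    show ?thesis
    proof (cases "finite (underS ?r i)")
      case True
      then show ?thesis unfolding e by (intro finite_lepoll_infinite[OF infA]) simp
    next
      case False
      then have "insert i (underS ?r i) \<approx> underS ?r i" by (rule infinite_insert_eqpoll)
      then show ?thesis unfolding e using u by (rule lepoll_trans1)
    qed
  qed
  have chain: "relChain ?r (under ?r)"
    unfolding relChain_def using under_incr[OF tr] by blast
  have cover: "(M \<rightarrow>\<^sub>E K) \<subseteq> (\<Union>i\<in>K. M \<rightarrow>\<^sub>E under ?r i)"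
  proof
    fix f assume f: "f \<in> M \<rightarrow>\<^sub>E K"
    have sub: "f ` M \<subseteq> (\<Union>i\<in>Field ?r. under ?r i)"
    proof
      fix y assume "y \<in> f ` M"
      then have "y \<in> K" using f by auto
      then show "y \<in> (\<Union>i\<in>Field ?r. under ?r i)" using Refl_under_in[OF refl] fld by blast
    qed
    have "|f ` M| \<le>o |M|" by (rule card_of_image)
    moreover have "|M| \<le>o |A|" using MA by (simp add: lepoll_ord)
    ultimately have "|f ` M| <o ?r" using lt ordLeq_transitive ordLeq_ordLess_trans by blast
    then obtain i where i: "i \<in> Field ?r" "f ` M \<subseteq> under ?r i"
      using regularCard_UNION[OF card_of_Card_order reg chain sub] by blast
    have "f \<in> M \<rightarrow>\<^sub>E under ?r i" using f i(2) by (auto simp: PiE_iff)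
    then show "f \<in> (\<Union>i\<in>K. M \<rightarrow>\<^sub>E under ?r i)" using i(1) fld by blast
  qed
  have "(\<Union>i\<in>K. M \<rightarrow>\<^sub>E under ?r i) \<subseteq> snd ` (SIGMA i:K. M \<rightarrow>\<^sub>E under ?r i)"
    by force
  then have "(M \<rightarrow>\<^sub>E K) \<lesssim> (SIGMA i:K. M \<rightarrow>\<^sub>E under ?r i)"
    using cover subset_image_lepoll by (metis subset_trans)
  also have "(SIGMA i:K. M \<rightarrow>\<^sub>E under ?r i) \<lesssim> (SIGMA i:K. M \<rightarrow>\<^sub>E A)"
    by (rule Sigma_lepoll_mono) (auto intro: lepoll_funcset_right und)
  finally show ?thesis .
qed


lemma ne_inf: "infinite X \<Longrightarrow> X \<noteq> {}" by auto

lemma main: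
  fixes K :: "'a set"
  assumes "K \<in> CC"
  shows "\<forall>(M::'a set) B. M \<in> CC \<longrightarrow> (B::'a set) \<approx> (M \<rightarrow>\<^sub>E K) \<longrightarrow> B \<in> CC"
  using assms
proof (induction rule: CC.induct)
  case (aleph0 K)
  show ?case
  proof (intro allI impI)
    fix M B :: "'a set" assume M: "M \<in> CC" and B: "B \<approx> (M \<rightarrow>\<^sub>E K)"
    have iM: "infinite M" by (rule CC_inf[OF M])
    have iK: "infinite K" by (rule CC_inf[OF CC.aleph0[OF aleph0]])
    have "(UNIV::nat set) \<lesssim> M" using iM unfolding infinite_le_lepoll .
    then have "K \<lesssim> M" by (rule lepoll_trans1[OF aleph0])
    then have "K \<lesssim> Pow M" by (rule lepoll_trans[OF _ lepoll_Pow_self])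
    then have "(M \<rightarrow>\<^sub>E K) \<approx> Pow M" by (rule G[OF iM iK])
    then show "B \<in> CC" by (rule CC.pow[OF M eqpoll_trans[OF B]])
  qed
next
  case (succ A K)
  have KCC: "K \<in> CC" by (rule CC.succ[OF succ.hyps])
  show ?case
  proof (intro allI impI)
    fix M B :: "'a set" assume M: "M \<in> CC" and B: "B \<approx> (M \<rightarrow>\<^sub>E K)"
    have iM: "infinite M" by (rule CC_inf[OF M])
    have iK: "infinite K" by (rule CC_inf[OF KCC])
    have iA: "infinite A" by (rule CC_inf[OF succ.hyps(1)])
    have AK: "A \<lesssim> K"
      unfolding lepoll_ord
      by (rule ordLess_imp_ordLeq[OF ordLess_ordIso_trans[OF cardSuc_greater[OF card_of_Card_order] ordIso_symmetric[OF succ.hyps(2)]]])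
    show "B \<in> CC"
    proof (cases "K \<lesssim> M")
      case True
      then have "K \<lesssim> Pow M" by (rule lepoll_trans[OF _ lepoll_Pow_self])
      then have "(M \<rightarrow>\<^sub>E K) \<approx> Pow M" by (rule G[OF iM iK])
      then show "B \<in> CC" by (rule CC.pow[OF M eqpoll_trans[OF B]])
    next
      case False
      have MA: "M \<lesssim> A"
      proof (rule ccontr)
        assume "\<not> M \<lesssim> A"
        then have "|A| <o |M|"
          using not_ordLeq_iff_ordLess[OF card_of_Well_order card_of_Well_order, of M A] by (simp add: lepoll_ord)
        then have "cardSuc |A| \<le>o |M|" by (rule cardSuc_least[OF card_of_Card_order card_of_Card_order])
        then have "|K| \<le>o |M|" by (rule ordIso_ordLeq_trans[OF succ.hyps(2)])
        then show False using False by (simp add: lepoll_ord)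
      qed
      let ?R = "M \<rightarrow>\<^sub>E A"
      have RB: "?R \<lesssim> B"
        using lepoll_trans2[OF lepoll_funcset_right[OF AK] eqpoll_sym[OF B]] .
      obtain C :: "'a set" where C: "C \<approx> ?R" using rep[OF RB] by blast
      have CCC: "C \<in> CC" using succ.IH[rule_format, OF M C] .
      have iR: "infinite ?R" by (rule inf_mono[OF const_lepoll[OF ne_inf[OF iM]] iA])
      have H: "(M \<rightarrow>\<^sub>E K) \<lesssim> K \<times> ?R" by (rule hausdorff[OF iA MA succ.hyps(2)])
      have KB: "K \<lesssim> B"
        by (rule lepoll_trans2[OF const_lepoll[OF ne_inf[OF iM]] eqpoll_sym[OF B]])
      show "B \<in> CC"
      proof (cases "?R \<lesssim> K")
        case True
        have "B \<lesssim> K"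
          using lepoll_trans[OF lepoll_trans1[OF B H] eqpoll_imp_lepoll[OF tmax2[OF iK True ne_inf[OF iR]]]] .
        then have "B \<approx> K" using KB by (rule lepoll_antisym)
        then show ?thesis by (rule CC_eqpoll[OF KCC])
      next
        case False
        then have "K \<lesssim> ?R" using lepoll_total[of K ?R] by blast
        then have "B \<lesssim> ?R"
          by (rule lepoll_trans[OF lepoll_trans1[OF B H] eqpoll_imp_lepoll[OF tmax[OF iR _ ne_inf[OF iK]]]])
        then have "B \<approx> ?R" using RB by (rule lepoll_antisym)
        then have "B \<approx> C" by (rule eqpoll_trans[OF _ eqpoll_sym[OF C]])
        then show ?thesis by (rule CC_eqpoll[OF CCC])
      qed
    qed
  qed
next
  case (sup A K)
  show ?case
  proof (intro allI impI)
    fix M B :: "'a set" assume M: "M \<in> CC" and B: "B \<approx> (M \<rightarrow>\<^sub>E K)"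
    have iM: "infinite M" by (rule CC_inf[OF M])
    have iA: "infinite (A n)" for n by (rule CC_inf[OF sup.hyps(1)])
    let ?P = "Pi\<^sub>E UNIV A"
    let ?U = "\<Union>n. A n"
    have KU: "K \<lesssim> ?U" by (rule sup.hyps(3), rule allI, rule subset_imp_lepoll) blast
    have AP: "A n \<lesssim> ?P" for n by (rule proj_lepoll) (metis iA finite.emptyI)
    have iP: "infinite ?P" by (rule inf_mono[OF AP iA])
    have "|?U| \<le>o |?P|"
    proof (rule card_of_UNION_ordLeq_infinite[OF iP])
      show "|UNIV :: nat set| \<le>o |?P|" using iP by (simp add: infinite_le_lepoll lepoll_ord)
      show "\<forall>n\<in>UNIV. |A n| \<le>o |?P|" using AP by (simp add: lepoll_ord)
    qed
    then have UP: "?U \<lesssim> ?P" by (simp add: lepoll_ord)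
    have KP: "K \<lesssim> ?P" by (rule lepoll_trans[OF KU UP])
    have iK: "infinite K" by (rule inf_mono[OF sup.hyps(2) iA])
    let ?R = "\<lambda>n. M \<rightarrow>\<^sub>E A n"
    have RB: "?R n \<lesssim> B" for n
      by (rule lepoll_trans2[OF lepoll_funcset_right[OF sup.hyps(2)] eqpoll_sym[OF B]])
    have "\<forall>n. \<exists>C :: 'a set. C \<approx> ?R n" using rep[OF RB] by blast
    then obtain C :: "nat \<Rightarrow> 'a set" where C: "\<And>n. C n \<approx> ?R n" by metis
    have CCC: "C n \<in> CC" for n using sup.IH[rule_format, OF M C] .
    have e1: "Pi\<^sub>E UNIV ?R \<approx> Pi\<^sub>E UNIV C" by (rule PiE_cong_eqpoll) (rule eqpoll_sym[OF C])
    have le1: "(M \<rightarrow>\<^sub>E K) \<lesssim> Pi\<^sub>E UNIV ?R"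
      by (rule lepoll_trans2[OF lepoll_funcset_right[OF KP] swap_eqpoll])
    have "Pi\<^sub>E UNIV ?R \<lesssim> Pi\<^sub>E UNIV (\<lambda>n::nat. M \<rightarrow>\<^sub>E K)"
      by (rule lepoll_PiE[where C="\<lambda>n::nat. M \<rightarrow>\<^sub>E K"]) (rule lepoll_funcset_right[OF sup.hyps(2)])
    also have "Pi\<^sub>E UNIV (\<lambda>n::nat. M \<rightarrow>\<^sub>E K) \<approx> (M \<rightarrow>\<^sub>E ((UNIV::nat set) \<rightarrow>\<^sub>E K))"
      by (rule eqpoll_sym[OF swap_eqpoll])
    also have "\<dots> \<approx> (M \<times> (UNIV::nat set) \<rightarrow>\<^sub>E K)" by (rule curry_eqpoll)
    also have "\<dots> \<approx> (M \<rightarrow>\<^sub>E K)"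
      by (rule fun_cong_eqpoll[OF nat_times[OF iM] eqpoll_refl ne_inf[OF iK]])
    finally have le2: "Pi\<^sub>E UNIV ?R \<lesssim> (M \<rightarrow>\<^sub>E K)" .
    have "(M \<rightarrow>\<^sub>E K) \<approx> Pi\<^sub>E UNIV ?R" by (rule lepoll_antisym[OF le1 le2])
    then have "B \<approx> Pi\<^sub>E UNIV C" by (rule eqpoll_trans[OF B eqpoll_trans[OF _ e1]])
    then show "B \<in> CC" by (rule CC.prod[OF CCC])
  qed
next
  case (prod A K)
  show ?case
  proof (intro allI impI)
    fix M B :: "'a set" assume M: "M \<in> CC" and B: "B \<approx> (M \<rightarrow>\<^sub>E K)"
    have iM: "infinite M" by (rule CC_inf[OF M])
    have iA: "infinite (A n)" for n by (rule CC_inf[OF prod.hyps(1)])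
    let ?P = "Pi\<^sub>E UNIV A"
    have AP: "A n \<lesssim> ?P" for n by (rule proj_lepoll) (metis iA finite.emptyI)
    have iP: "infinite ?P" by (rule inf_mono[OF AP iA])
    have AK: "A n \<lesssim> K" for n by (rule lepoll_trans2[OF AP eqpoll_sym[OF prod.hyps(2)]])
    let ?R = "\<lambda>n. M \<rightarrow>\<^sub>E A n"
    have RB: "?R n \<lesssim> B" for n
      by (rule lepoll_trans2[OF lepoll_funcset_right[OF AK] eqpoll_sym[OF B]])
    have "\<forall>n. \<exists>C :: 'a set. C \<approx> ?R n" using rep[OF RB] by blast
    then obtain C :: "nat \<Rightarrow> 'a set" where C: "\<And>n. C n \<approx> ?R n" by metis
    have CCC: "C n \<in> CC" for n using prod.IH[rule_format, OF M C] .
    have e1: "Pi\<^sub>E UNIV ?R \<approx> Pi\<^sub>E UNIV C" by (rule PiE_cong_eqpoll) (rule eqpoll_sym[OF C])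
    have "(M \<rightarrow>\<^sub>E K) \<approx> (M \<rightarrow>\<^sub>E ?P)"
      by (rule fun_cong_eqpoll[OF eqpoll_refl prod.hyps(2)]) (use iP eqpoll_finite_iff[OF prod.hyps(2)] in auto)
    also have "\<dots> \<approx> Pi\<^sub>E UNIV ?R" by (rule swap_eqpoll)
    also note e1
    finally have "(M \<rightarrow>\<^sub>E K) \<approx> Pi\<^sub>E UNIV C" .
    then show "B \<in> CC" by (rule CC.prod[OF CCC eqpoll_trans[OF B]])
  qed
next
  case (pow A K)
  show ?case
  proof (intro allI impI)
    fix M B :: "'a set" assume M: "M \<in> CC" and B: "B \<approx> (M \<rightarrow>\<^sub>E K)"
    have iM: "infinite M" by (rule CC_inf[OF M])
    have iA: "infinite A" by (rule CC_inf[OF pow.hyps(1)])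
    have iK: "infinite K" by (rule CC_inf[OF CC.pow[OF pow.hyps]])
    show "B \<in> CC"
    proof (cases "A \<lesssim> M")
      case True
      have "K \<lesssim> Pow M"
        by (rule lepoll_trans1[OF pow.hyps(2) Pow_lepoll_mono[OF True]])
      then have "(M \<rightarrow>\<^sub>E K) \<approx> Pow M" by (rule G[OF iM iK])
      then show "B \<in> CC" by (rule CC.pow[OF M eqpoll_trans[OF B]])
    next
      case False
      then have MA: "M \<lesssim> A" using lepoll_total[of M A] by blast
      have "(M \<rightarrow>\<^sub>E K) \<approx> (M \<rightarrow>\<^sub>E (A \<rightarrow>\<^sub>E (UNIV::bool set)))"
        by (rule fun_cong_eqpoll[OF eqpoll_refl eqpoll_trans[OF pow.hyps(2) Pow_fun] ne_inf[OF iK]])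
      also have "\<dots> \<approx> (M \<times> A \<rightarrow>\<^sub>E (UNIV::bool set))" by (rule curry_eqpoll)
      also have "\<dots> \<approx> (A \<rightarrow>\<^sub>E (UNIV::bool set))"
        by (rule fun_cong_eqpoll[OF tmax[OF iA MA ne_inf[OF iM]] eqpoll_refl]) simp
      also have "\<dots> \<approx> Pow A" by (rule eqpoll_sym[OF Pow_fun])
      finally show "B \<in> CC" by (rule CC.pow[OF pow.hyps(1) eqpoll_trans[OF B]])
    qed
  qed
qed

theorem theorem3p8:
  fixes K M B :: "'a set"
  assumes "K \<in> CC" and "M \<in> CC" and "B \<approx> (M \<rightarrow>\<^sub>E K)"
  shows "B \<in> CC"
  using main[OF assms(1)] assms(2,3) by blast

end
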